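(* Let $\mathbb{X}\subset\mathbb{R}^m$ be compact and let $f:\mathbb{R}^m\to\mathbb{R}$ be continuous and positive homogeneous. Then for every $\epsilon>0$ there exists a finite-layer HomoMLP $\mathcal{A}'$ with ReLU activations, representing $F_{\mathcal{A}'}$, such that $|F_{\mathcal{A}'}(x)-f(x)|<\epsilon$ for all $x\in\mathbb{X}$.
   Context: A function $g$ is positive homogeneous iff $g(\lambda x)=\lambda g(x)$ for all $x$ and all $\lambda>0$. A HomoMLP is a multilayer perceptron without bias terms whose activation functions are positive homogeneous, i.e. $x\mapsto W_L\,\sigma(W_{L-1}\,\sigma(\cdots\sigma(W_1x)\cdots))$ with $\sigma$ applied coordinatewise (here $\sigma=\mathrm{ReLU}$). *)

theory Defs
  imports "HOL-Analysis.Analysis"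
begin

definition pos_homogeneous :: "('a::real_vector \<Rightarrow> 'b::real_vector) \<Rightarrow> bool" where
  "pos_homogeneous g \<longleftrightarrow> (\<forall>x. \<forall>c::real. c > 0 \<longrightarrow> g (c *\<^sub>R x) = c *\<^sub>R g x)"

definition relu :: "real \<Rightarrow> real" where
  "relu t = max 0 t"

definition matvec :: "real list list \<Rightarrow> real list \<Rightarrow> real list" where
  "matvec W v = map (\<lambda>row. sum_list (map2 (*) row v)) W"

text \<open>A bias-free ReLU MLP x \<mapsto> W_L \<sigma>(W_{L-1} \<sigma>(... \<sigma>(W_1 x))) with input in R^m
  (type real^'m) and scalar output.\<close>

fun hidden_eval :: "real list list list \<Rightarrow> real list \<Rightarrow> real list" where
  "hidden_eval [] v = v"
| "hidden_eval (W # Ws) v = hidden_eval Ws (matvec W (map relu v))"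

definition mlp_eval :: "(real^'m::finite) list \<Rightarrow> real list list list \<Rightarrow> real^'m \<Rightarrow> real list" where
  "mlp_eval W1 Ws x = hidden_eval Ws (map (\<lambda>w. w \<bullet> x) W1)"

fun layers_wf :: "nat \<Rightarrow> real list list list \<Rightarrow> bool" where
  "layers_wf d [] \<longleftrightarrow> d = 1"
| "layers_wf d (W # Ws) \<longleftrightarrow> (\<forall>row\<in>set W. length row = d) \<and> layers_wf (length W) Ws"

definition homo_mlp_wf :: "(real^'m::finite) list \<Rightarrow> real list list list \<Rightarrow> bool" where
  "homo_mlp_wf W1 Ws \<longleftrightarrow> layers_wf (length W1) Ws"

definition homo_mlp_fun :: "(real^'m::finite) list \<Rightarrow> real list list list \<Rightarrow> real^'m \<Rightarrow> real" where
  "homo_mlp_fun W1 Ws x = hd (mlp_eval W1 Ws x)"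

end

theory Submission
  imports Defs
begin

fun lvl :: "nat \<Rightarrow> (real^'m::finite \<Rightarrow> real) \<Rightarrow> bool" where
  "lvl 0 g = (\<exists>w. g = (\<lambda>x. w \<bullet> x))"
| "lvl (Suc k) g = (\<exists>(n::nat) c q. (\<forall>i<n. lvl k (q i)) \<and> g = (\<lambda>x. \<Sum>i<n. c i * relu (q i x)))"

declare lvl.simps(2)[simp del]

lemma lvlI: "(\<forall>i<(n::nat). lvl k (q i)) \<Longrightarrow> g = (\<lambda>x. \<Sum>i<n. c i * relu (q i x)) \<Longrightarrow> lvl (Suc k) g"
  unfolding lvl.simps(2) by blast

lemma lvlE: "lvl (Suc k) g \<Longrightarrow> (\<And>n c q. \<forall>i<(n::nat). lvl k (q i) \<Longrightarrow> g = (\<lambda>x. \<Sum>i<n. c i * relu (q i x)) \<Longrightarrow> P) \<Longrightarrow> P"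
  unfolding lvl.simps(2) by blast

lemma sum_split_add: "(\<Sum>i<a+(b::nat). F i) = (\<Sum>i<a. F i) + (\<Sum>i<b. F (a+i))"
  by (induction b) (auto simp: ac_simps)

lemma lvl_zero: "lvl k (\<lambda>x. 0)"
  by (cases k) (auto intro!: exI[of _ 0] lvlI[where n=0] simp: fun_eq_iff)

lemma lvl_scale: "lvl k g \<Longrightarrow> lvl k (\<lambda>x. a * g x)"
proof (cases k)
  case 0
  assume "lvl k g"
  then obtain w where "g = (\<lambda>x. w \<bullet> x)" using 0 by auto
  then show ?thesis using 0 by (auto intro!: exI[of _ "a *\<^sub>R w"])
next
  case (Suc j)
  assume "lvl k g"
  then have "lvl (Suc j) g" using Suc by simp
  then obtain n c q where h: "\<forall>i<(n::nat). lvl j (q i)" "g = (\<lambda>x. \<Sum>i<n. c i * relu (q i x))"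
    unfolding lvl.simps(2) by blast
  show ?thesis unfolding Suc using h
    by (auto intro!: lvlI[where n=n and c="\<lambda>i. a * c i" and q=q] simp: sum_distrib_left mult.assoc)
qed

lemma lvl_add: "lvl k g \<Longrightarrow> lvl k h \<Longrightarrow> lvl k (\<lambda>x. g x + h x)"
proof (cases k)
  case 0
  assume "lvl k g" "lvl k h"
  then obtain w v where "g = (\<lambda>x. w \<bullet> x)" "h = (\<lambda>x. v \<bullet> x)" using 0 by auto
  then show ?thesis using 0 by (auto intro!: exI[of _ "w + v"] simp: inner_add_left)
next
  case (Suc j)
  assume "lvl k g" "lvl k h"
  then have g: "lvl (Suc j) g" and hh: "lvl (Suc j) h" using Suc by simp_all
  obtain n1 c1 q1 where h1: "\<forall>i<(n1::nat). lvl j (q1 i)" "g = (\<lambda>x. \<Sum>i<n1. c1 i * relu (q1 i x))"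
    using g unfolding lvl.simps(2) by blast
  obtain n2 c2 q2 where h2: "\<forall>i<(n2::nat). lvl j (q2 i)" "h = (\<lambda>x. \<Sum>i<n2. c2 i * relu (q2 i x))"
    using hh unfolding lvl.simps(2) by blast
  define C where "C i = (if i < n1 then c1 i else c2 (i - n1))" for i
  define Q where "Q i = (if i < n1 then q1 i else q2 (i - n1))" for i
  have "\<forall>i<n1+n2. lvl j (Q i)" using h1 h2 by (auto simp: Q_def)
  moreover have "(\<lambda>x. g x + h x) = (\<lambda>x. \<Sum>i<n1+n2. C i * relu (Q i x))"
    unfolding sum_split_add by (simp add: h1 h2 C_def Q_def)
  ultimately show ?thesis unfolding Suc by (rule lvlI)
qed

lemma relu_id: "relu t - relu (-t) = t"
  by (simp add: relu_def)

lemma lvl_up: "lvl k g \<Longrightarrow> lvl (Suc k) g"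
proof -
  assume a: "lvl k g"
  define q where "q i = (if i = (0::nat) then g else (\<lambda>x. -1 * g x))" for i
  define c where "c i = (if i = (0::nat) then 1 else (-1::real))" for i
  have "\<forall>i<2. lvl k (q i)" using a lvl_scale[OF a, of "-1"] by (auto simp: q_def)
  moreover have "g = (\<lambda>x. \<Sum>i<2. c i * relu (q i x))"
    by (auto simp: numeral_2_eq_2 c_def q_def relu_def)
  ultimately show ?thesis by (rule lvlI)
qed

lemma lvl_mono: "k \<le> k' \<Longrightarrow> lvl k g \<Longrightarrow> lvl k' g"
  by (induction k' rule: dec_induct) (auto intro: lvl_up)

lemma lvl_max: "lvl k g \<Longrightarrow> lvl k h \<Longrightarrow> lvl (Suc k) (\<lambda>x. max (g x) (h x))"
proof -
  assume a: "lvl k g" "lvl k h"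
  define q where "q i = (if i = (0::nat) then (\<lambda>x. g x + -1 * h x) else if i = 1 then h else (\<lambda>x. -1 * h x))" for i
  define c where "c i = (if i = (2::nat) then -1 else (1::real))" for i
  have "\<forall>i<3. lvl k (q i)" using a lvl_scale[OF a(2), of "-1", simplified] lvl_add[OF a(1) lvl_scale[OF a(2), of "-1"], simplified]
    by (auto simp: q_def)
  moreover have "(\<lambda>x. max (g x) (h x)) = (\<lambda>x. \<Sum>i<3. c i * relu (q i x))"
    by (auto simp: numeral_3_eq_3 c_def q_def relu_def)
  ultimately show ?thesis by (rule lvlI)
qed

lemma lvl_cont: "lvl k g \<Longrightarrow> continuous_on UNIV g"
proof (induction k arbitrary: g)
  case 0
  then obtain w where "g = (\<lambda>x. w \<bullet> x)" by auto
  then show ?case by (simp add: continuous_on_inner continuous_on_const continuous_on_id)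
next
  case (Suc k)
  then obtain n c q where h: "\<forall>i<(n::nat). lvl k (q i)" "g = (\<lambda>x. \<Sum>i<n. c i * relu (q i x))"
    unfolding lvl.simps(2) by blast
  have "\<forall>i<n. continuous_on UNIV (q i)" using h Suc.IH by auto
  then show ?case unfolding h relu_def
    by (intro continuous_on_sum continuous_on_mult continuous_on_max continuous_on_const) auto
qed

fun layers_to :: "nat \<Rightarrow> real list list list \<Rightarrow> nat \<Rightarrow> bool" where
  "layers_to d [] e \<longleftrightarrow> d = e"
| "layers_to d (W # Ws) e \<longleftrightarrow> (\<forall>row\<in>set W. length row = d) \<and> layers_to (length W) Ws e"

lemma layers_to_wf: "layers_to d Ws 1 \<Longrightarrow> layers_wf d Ws"
  by (induction Ws arbitrary: d) auto

lemma layers_to_snoc: "layers_to d Ws N \<Longrightarrow> \<forall>row\<in>set R. length row = N \<Longrightarrow> layers_to d (Ws @ [R]) (length R)"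
  by (induction Ws arbitrary: d) auto

lemma hidden_snoc: "hidden_eval (Ws @ [R]) v = matvec R (map relu (hidden_eval Ws v))"
  by (induction Ws arbitrary: v) auto

lemma map2_maps: "map2 (*) (map f xs) (map g xs) = map (\<lambda>t. f t * g t) xs"
  by (induction xs) auto

lemma sum_list_upt: "sum_list (map h [0..<N]) = (\<Sum>t<N. h t)"
  by (induction N) auto

lemma dot_upt: "sum_list (map2 (*) (map f [0..<N]) (map g [0..<N])) = (\<Sum>t<N. f t * (g t::real))"
  by (simp add: map2_maps sum_list_upt)

lemma reindex_block:
  fixes G :: "nat \<Rightarrow> real"
  assumes "i < n"
  shows "(\<Sum>t<n*M. (if t div M = i then G (t mod M) else 0)) = (\<Sum>j<M. G j)"
proof (cases "M = 0")
  case True then show ?thesis by simp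
next
  case False
  have "(\<Sum>t<n*M. (if t div M = i then G (t mod M) else 0)) = (\<Sum>t\<in>{t\<in>{..<n*M}. t div M = i}. G (t mod M))"
    by (simp only: sum.inter_filter[OF finite_lessThan])
  also have "{t\<in>{..<n*M}. t div M = i} = (\<lambda>j. i*M + j) ` {..<M}"
  proof (rule set_eqI, rule iffI)
    fix t assume "t \<in> {t\<in>{..<n*M}. t div M = i}"
    then have ti: "t div M = i" by simp
    have "t = i*M + t mod M" using div_mult_mod_eq[of t M] ti by simp
    moreover have "t mod M < M" using False by simp
    ultimately show "t \<in> (\<lambda>j. i*M + j) ` {..<M}" by blast
  next
    fix t assume "t \<in> (\<lambda>j. i*M + j) ` {..<M}"
    then obtain j where j: "j < M" "t = i*M + j" by auto
    have "i*M + j < (i+1)*M" using j by simp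
    also have "\<dots> \<le> n*M" using assms by (intro mult_right_mono) auto
    finally have "t < n*M" using j by simp
    moreover have "t div M = i"
      using j False by (simp add: div_mult_self2 add.commute[of "i*M"])
    ultimately show "t \<in> {t\<in>{..<n*M}. t div M = i}" by simp
  qed
  also have "(\<Sum>t\<in>(\<lambda>j. i*M + j) ` {..<M}. G (t mod M)) = (\<Sum>j<M. G j)"
    by (subst sum.reindex) (auto simp: inj_on_def)
  finally show ?thesis .
qed

lemma realize:
  "(\<forall>i<n. lvl k (F i)) \<Longrightarrow> \<exists>W1 Ws. layers_to (length W1) Ws n \<and> (\<forall>x. mlp_eval W1 Ws x = map (\<lambda>i. F i x) [0..<n])"
proof (induction k arbitrary: n F)
  case 0
  then have "\<forall>i. \<exists>w. i < n \<longrightarrow> F i = (\<lambda>x. w \<bullet> x)" by auto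
  then obtain w where w: "\<And>i. i < n \<Longrightarrow> F i = (\<lambda>x. w i \<bullet> x)" by metis
  show ?case
    by (rule exI[of _ "map w [0..<n]"], rule exI[of _ "[]"]) (auto simp: mlp_eval_def w)
next
  case (Suc k)
  have "\<exists>m c q. (\<forall>j<(m::nat). lvl k (q j)) \<and> F i = (\<lambda>x. \<Sum>j<m. c j * relu (q j x))" if "i < n" for i
    using Suc.prems that by (simp add: lvl.simps(2))
  then obtain nn c q where h: "\<And>i. i < n \<Longrightarrow> (\<forall>j<(nn i::nat). lvl k (q i j)) \<and> F i = (\<lambda>x. \<Sum>j<nn i. c i j * relu (q i j x))"
    by metis
  define M where "M = (\<Sum>i<n. nn i)"
  have nnM: "nn i \<le> M" if "i < n" for i
    unfolding M_def using that by (intro member_le_sum) auto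
  define c' where "c' i j = (if j < nn i then c i j else 0)" for i j
  define q' where "q' i j = (if j < nn i then q i j else (\<lambda>x. 0))" for i j
  define Q where "Q t = q' (t div M) (t mod M)" for t
  have "\<forall>t<n*M. lvl k (Q t)"
  proof (intro allI impI)
    fix t assume t: "t < n*M"
    then have "M > 0" by (cases "M = 0") auto
    then have "t div M < n" using t by (simp add: div_less_iff_less_mult)
    then show "lvl k (Q t)" using h by (auto simp: Q_def q'_def lvl_zero)
  qed
  from Suc.IH[OF this] obtain W1 Ws where
    w: "layers_to (length W1) Ws (n*M)" "\<forall>x. mlp_eval W1 Ws x = map (\<lambda>t. Q t x) [0..<n*M]"
    by blast
  define R where "R = map (\<lambda>i. map (\<lambda>t. if t div M = i then c' i (t mod M) else 0) [0..<n*M]) [0..<n]"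
  have Fi: "F i x = (\<Sum>t<n*M. (if t div M = i then c' i (t mod M) else 0) * relu (Q t x))" if "i < n" for i x
  proof -
    have "F i x = (\<Sum>j<nn i. c i j * relu (q i j x))" using h[OF that] by simp
    also have "\<dots> = (\<Sum>j\<in>{j\<in>{..<M}. j < nn i}. c i j * relu (q i j x))"
    proof (rule sum.cong)
      show "{..<nn i} = {j\<in>{..<M}. j < nn i}" using nnM[OF that] by auto
    qed simp
    also have "\<dots> = (\<Sum>j<M. if j < nn i then c i j * relu (q i j x) else 0)"
      by (simp only: sum.inter_filter[OF finite_lessThan])
    also have "\<dots> = (\<Sum>j<M. c' i j * relu (q' i j x))"
      by (intro sum.cong) (simp_all add: c'_def q'_def)
    also have "\<dots> = (\<Sum>t<n*M. (if t div M = i then c' i (t mod M) * relu (Q t x) else 0))"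
    proof -
      have "(\<Sum>t<n*M. (if t div M = i then c' i (t mod M) * relu (Q t x) else 0))
          = (\<Sum>t<n*M. (if t div M = i then (\<lambda>j. c' i j * relu (q' i j x)) (t mod M) else 0))"
        by (intro sum.cong) (auto simp: Q_def)
      then show ?thesis using reindex_block[OF that, of M "\<lambda>j. c' i j * relu (q' i j x)"] by simp
    qed
    also have "\<dots> = (\<Sum>t<n*M. (if t div M = i then c' i (t mod M) else 0) * relu (Q t x))"
      by (intro sum.cong) auto
    finally show ?thesis .
  qed
  show ?case
  proof (rule exI[of _ W1], rule exI[of _ "Ws @ [R]"], intro conjI allI)
    show "layers_to (length W1) (Ws @ [R]) n"
      using layers_to_snoc[OF w(1), of R] by (simp add: R_def)
    fix x
    show "mlp_eval W1 (Ws @ [R]) x = map (\<lambda>i. F i x) [0..<n]"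
      using w(2) unfolding mlp_eval_def hidden_snoc
      by (simp add: matvec_def R_def Fi o_def dot_upt)
  qed
qed


lemma fin_max:
  assumes "finite D" "D \<noteq> {}" "\<forall>y\<in>D. P (G y)"
    and mx: "\<And>g h. P g \<Longrightarrow> P h \<Longrightarrow> P (\<lambda>x. max (g x) (h x))"
  shows "P (\<lambda>z. Max ((\<lambda>y. G y z) ` D))"
  using assms(1-3)
proof (induction D rule: finite_ne_induct)
  case (singleton y)
  then show ?case by (simp add: eta_contract_eq)
next
  case (insert y D)
  have "(\<lambda>z. Max ((\<lambda>y. G y z) ` insert y D)) = (\<lambda>z. max (G y z) (Max ((\<lambda>y. G y z) ` D)))"
    using insert by (auto simp: Max_insert)
  then show ?case using insert mx by simp
qed

lemma fin_min:
  assumes "finite D" "D \<noteq> {}" "\<forall>y\<in>D. P (G y)"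
    and mx: "\<And>g h. P g \<Longrightarrow> P h \<Longrightarrow> P (\<lambda>x. min (g x) (h x))"
  shows "P (\<lambda>z. Min ((\<lambda>y. G y z) ` D))"
  using assms(1-3)
proof (induction D rule: finite_ne_induct)
  case (singleton y)
  then show ?case by (simp add: eta_contract_eq)
next
  case (insert y D)
  have "(\<lambda>z. Min ((\<lambda>y. G y z) ` insert y D)) = (\<lambda>z. min (G y z) (Min ((\<lambda>y. G y z) ` D)))"
    using insert by (auto simp: Min_insert)
  then show ?case using insert mx by simp
qed

lemma KK:
  fixes f :: "'a::topological_space \<Rightarrow> real" and P :: "('a \<Rightarrow> real) \<Rightarrow> bool"
  assumes K: "compact K" "K \<noteq> {}" and fc: "continuous_on UNIV f"
    and Pc: "\<And>g. P g \<Longrightarrow> continuous_on UNIV g"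
    and mx: "\<And>g h. P g \<Longrightarrow> P h \<Longrightarrow> P (\<lambda>x. max (g x) (h x))"
    and mn: "\<And>g h. P g \<Longrightarrow> P h \<Longrightarrow> P (\<lambda>x. min (g x) (h x))"
    and ip: "\<And>x y. x \<in> K \<Longrightarrow> y \<in> K \<Longrightarrow> \<exists>g. P g \<and> g x = f x \<and> g y = f y"
    and e: "\<epsilon> > 0"
  shows "\<exists>g. P g \<and> (\<forall>x\<in>K. \<bar>g x - f x\<bar> < \<epsilon>)"
proof -
  have step1: "\<exists>h. P h \<and> h x = f x \<and> (\<forall>z\<in>K. f z - \<epsilon> < h z)" if x: "x \<in> K" for x
  proof -
    obtain G where G: "\<And>y. y \<in> K \<Longrightarrow> P (G y) \<and> G y x = f x \<and> G y y = f y"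
      using ip[OF x] by metis
    have cov: "K \<subseteq> (\<Union>y\<in>K. {z. f z - \<epsilon> < G y z})" using G e by force
    have op: "open {z. f z - \<epsilon> < G y z}" if "y \<in> K" for y
      using Pc G[OF that] by (intro open_Collect_less continuous_on_diff fc continuous_on_const) auto
    obtain D where D: "D \<subseteq> K" "finite D" "K \<subseteq> (\<Union>y\<in>D. {z. f z - \<epsilon> < G y z})"
      using compactE_image[OF K(1) op cov] by blast
    have Dne: "D \<noteq> {}" using D K(2) by auto
    define h where "h z = Max ((\<lambda>y. G y z) ` D)" for z
    have "P h" unfolding h_def using fin_max[OF D(2) Dne, of P G] G D(1) mx by blast
    moreover have "(\<lambda>y. G y x) ` D = {f x}"
    proof
      show "(\<lambda>y. G y x) ` D \<subseteq> {f x}" using G D(1) by auto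
      obtain y0 where "y0 \<in> D" using Dne by auto
      then show "{f x} \<subseteq> (\<lambda>y. G y x) ` D" using G D(1) by (auto intro!: image_eqI[of _ _ y0])
    qed
    then have "h x = f x" by (simp add: h_def)
    moreover have "f z - \<epsilon> < h z" if zK: "z \<in> K" for z
    proof -
      obtain y where "y \<in> D" "f z - \<epsilon> < G y z" using D(3) zK by blast
      moreover have "G y z \<le> h z" unfolding h_def using D(2) \<open>y \<in> D\<close> by simp
      ultimately show ?thesis by linarith
    qed
    ultimately show ?thesis by blast
  qed
  obtain H where H: "\<And>x. x \<in> K \<Longrightarrow> P (H x) \<and> H x x = f x \<and> (\<forall>z\<in>K. f z - \<epsilon> < H x z)"
    using step1 by metis
  have cov: "K \<subseteq> (\<Union>x\<in>K. {z. H x z < f z + \<epsilon>})" using H e by force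
  have op: "open {z. H x z < f z + \<epsilon>}" if "x \<in> K" for x
    using Pc H[OF that] by (intro open_Collect_less continuous_on_add fc continuous_on_const) auto
  obtain D where D: "D \<subseteq> K" "finite D" "K \<subseteq> (\<Union>x\<in>D. {z. H x z < f z + \<epsilon>})"
    using compactE_image[OF K(1) op cov] by blast
  have Dne: "D \<noteq> {}" using D K(2) by auto
  define g where "g z = Min ((\<lambda>x. H x z) ` D)" for z
  have "P g" unfolding g_def using fin_min[OF D(2) Dne, of P H] H D(1) mn by blast
  moreover have "\<bar>g z - f z\<bar> < \<epsilon>" if z: "z \<in> K" for z
  proof -
    obtain x where x: "x \<in> D" "H x z < f z + \<epsilon>" using D(3) z by blast
    have "g z \<le> H x z" unfolding g_def using D(2) x(1) by simp
    moreover have "f z - \<epsilon> < g z" unfolding g_def using D Dne H z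
      by (subst Min_gr_iff) auto
    ultimately show ?thesis using x by linarith
  qed
  ultimately show ?thesis by blast
qed


lemma ph0:
  fixes f :: "'a::real_vector \<Rightarrow> real"
  assumes ph: "pos_homogeneous f" shows "f 0 = 0"
proof -
  have "f (c *\<^sub>R x) = c *\<^sub>R f x" if "c > 0" for c x using ph that unfolding pos_homogeneous_def by blast
  from this[of 2 0] have "f 0 = 2 * f 0" by simp
  then show ?thesis by linarith
qed

definition linef :: "(real^'m::finite \<Rightarrow> real) \<Rightarrow> real^'m \<Rightarrow> real^'m \<Rightarrow> real" where
  "linef f x z = f x * relu (((1 / (x \<bullet> x)) *\<^sub>R x) \<bullet> z) + f (-x) * relu ((-((1 / (x \<bullet> x)) *\<^sub>R x)) \<bullet> z)"

lemma linef_lvl: "lvl (Suc 0) (linef f x)"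
proof -
  define u where "u = (1 / (x \<bullet> x)) *\<^sub>R x"
  define q where "q i = (if i = (0::nat) then (\<lambda>z. u \<bullet> z) else (\<lambda>z. (-u) \<bullet> z))" for i
  define c where "c i = (if i = (0::nat) then f x else f (-x))" for i
  have "\<forall>i<2. lvl 0 (q i)" by (auto simp: q_def)
  moreover have "linef f x = (\<lambda>z. \<Sum>i<2. c i * relu (q i z))"
    by (auto simp: numeral_2_eq_2 c_def q_def linef_def u_def)
  ultimately show ?thesis by (rule lvlI)
qed

lemma linef_eq:
  assumes ph: "pos_homogeneous f" and x: "x \<noteq> 0"
  shows "linef f x (c *\<^sub>R x) = f (c *\<^sub>R x)"
proof -
  have xx: "x \<bullet> x \<noteq> 0" using x by simp
  have u: "((1 / (x \<bullet> x)) *\<^sub>R x) \<bullet> (c *\<^sub>R x) = c" using xx by simp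
  have u2: "(-((1 / (x \<bullet> x)) *\<^sub>R x)) \<bullet> (c *\<^sub>R x) = -c" using xx by simp
  consider "c > 0" | "c = 0" | "c < 0" by linarith
  then show ?thesis
  proof cases
    case 1
    then show ?thesis using ph unfolding linef_def u u2 pos_homogeneous_def relu_def by simp
  next
    case 2
    then show ?thesis using ph0[OF ph] unfolding linef_def u u2 relu_def by simp
  next
    case 3
    have e: "0 < -c \<Longrightarrow> f ((-c) *\<^sub>R (-x)) = (-c) *\<^sub>R f (-x)" using ph unfolding pos_homogeneous_def by blast
    have "f (c *\<^sub>R x) = f ((-c) *\<^sub>R (-x))" by simp
    also have "\<dots> = (-c) * f (-x)" using e 3 by simp
    finally show ?thesis using 3 unfolding linef_def u u2 relu_def by simp
  qed
qed

lemma interp: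
  fixes f :: "real^'m::finite \<Rightarrow> real"
  assumes ph: "pos_homogeneous f"
  shows "\<exists>g. (\<exists>k. lvl k g) \<and> g x = f x \<and> g y = f y"
proof -
  have f0: "f 0 = 0" using ph0[OF ph] .
  consider "x = 0" "y = 0" | "x = 0" "y \<noteq> 0" | "x \<noteq> 0" "\<exists>c. y = c *\<^sub>R x" | "x \<noteq> 0" "\<not> (\<exists>c. y = c *\<^sub>R x)"
    by blast
  then show ?thesis
  proof cases
    case 1
    then show ?thesis using f0 by (intro exI[of _ "\<lambda>x. 0"] conjI exI[of _ 0] lvl_zero) auto
  next
    case 2
    have "linef f y x = f x" using linef_eq[OF ph 2(2), of 0] 2 by simp
    moreover have "linef f y y = f y" using linef_eq[OF ph 2(2), of 1] by simp
    ultimately show ?thesis by (intro exI[of _ "linef f y"] conjI exI[of _ "Suc 0"] linef_lvl)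
  next
    case 3
    then obtain c where c: "y = c *\<^sub>R x" by blast
    have "linef f x x = f x" using linef_eq[OF ph 3(1), of 1] by simp
    moreover have "linef f x y = f y" using linef_eq[OF ph 3(1), of c] c by simp
    ultimately show ?thesis by (intro exI[of _ "linef f x"] conjI exI[of _ "Suc 0"] linef_lvl)
  next
    case 4
    define D where "D = (x \<bullet> x) * (y \<bullet> y) - (x \<bullet> y) * (x \<bullet> y)"
    have "D \<noteq> 0"
    proof
      assume "D = 0"
      then have "(x \<bullet> y) * (x \<bullet> y) = (x \<bullet> x) * (y \<bullet> y)" by (simp add: D_def)
      then have "(x \<bullet> y)^2 = (norm x)^2 * (norm y)^2"
        unfolding power2_norm_eq_inner by (simp add: power2_eq_square)
      then have "\<bar>x \<bullet> y\<bar>^2 = (norm x * norm y)^2" by (simp add: power_mult_distrib)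
      then have "\<bar>x \<bullet> y\<bar> = norm x * norm y"
        using power2_eq_iff_nonneg[of "\<bar>x \<bullet> y\<bar>" "norm x * norm y"] by simp
      then have "norm x *\<^sub>R y = norm y *\<^sub>R x \<or> norm x *\<^sub>R y = - norm y *\<^sub>R x"
        by (simp add: norm_cauchy_schwarz_abs_eq)
      moreover have nx: "norm x \<noteq> 0" using 4(1) by simp
      ultimately have "y = (norm y / norm x) *\<^sub>R x \<or> y = (- norm y / norm x) *\<^sub>R x"
      proof (elim disjE)
        assume h: "norm x *\<^sub>R y = norm y *\<^sub>R x"
        have "y = (1 / norm x) *\<^sub>R (norm x *\<^sub>R y)" using nx by simp
        also have "\<dots> = (norm y / norm x) *\<^sub>R x" unfolding h by simp
        finally show ?thesis by (rule disjI1)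
      next
        assume h: "norm x *\<^sub>R y = - norm y *\<^sub>R x"
        have "y = (1 / norm x) *\<^sub>R (norm x *\<^sub>R y)" using nx by simp
        also have "\<dots> = (- norm y / norm x) *\<^sub>R x" unfolding h by simp
        finally show ?thesis by (rule disjI2)
      qed
      then show False using 4(2) by blast
    qed
    define a where "a = f x"
    define b where "b = f y"
    define p where "p = (a * (y \<bullet> y) - b * (x \<bullet> y)) / D"
    define q where "q = (b * (x \<bullet> x) - a * (x \<bullet> y)) / D"
    define w where "w = p *\<^sub>R x + q *\<^sub>R y"
    define xx where "xx = x \<bullet> x"
    define yy where "yy = y \<bullet> y"
    define xy where "xy = x \<bullet> y"
    have Dd: "D = xx * yy - xy * xy" by (simp add: D_def xx_def yy_def xy_def)
    have "w \<bullet> x = p * xx + q * xy"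
      by (simp add: w_def inner_add_left inner_commute[of y x] xx_def xy_def)
    also have "\<dots> = ((a*yy - b*xy)*xx + (b*xx - a*xy)*xy) / D"
      by (simp add: p_def q_def xy_def yy_def xx_def add_divide_distrib)
    also have "(a*yy - b*xy)*xx + (b*xx - a*xy)*xy = a * D" by (simp add: Dd algebra_simps)
    also have "a * D / D = a" using \<open>D \<noteq> 0\<close> by simp
    finally have wx: "w \<bullet> x = f x" by (simp add: a_def)
    have "w \<bullet> y = p * xy + q * yy"
      by (simp add: w_def inner_add_left xy_def yy_def)
    also have "\<dots> = ((a*yy - b*xy)*xy + (b*xx - a*xy)*yy) / D"
      by (simp add: p_def q_def xy_def yy_def xx_def add_divide_distrib)
    also have "(a*yy - b*xy)*xy + (b*xx - a*xy)*yy = b * D" by (simp add: Dd algebra_simps)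
    also have "b * D / D = b" using \<open>D \<noteq> 0\<close> by simp
    finally have wy: "w \<bullet> y = f y" by (simp add: b_def)
    have "lvl 0 (\<lambda>z. w \<bullet> z)" by auto
    then show ?thesis using wx wy by (intro exI[of _ "\<lambda>z. w \<bullet> z"] conjI exI[of _ 0])
  qed
qed

theorem mainTheorem6:
  fixes X :: "(real^'m) set" and f :: "real^'m \<Rightarrow> real" and \<epsilon> :: real
  assumes "compact X"
    and "continuous_on UNIV f"
    and "pos_homogeneous f"
    and "\<epsilon> > 0"
  shows "\<exists>W1 Ws. homo_mlp_wf W1 Ws \<and> (\<forall>x\<in>X. \<bar>homo_mlp_fun W1 Ws x - f x\<bar> < \<epsilon>)"
proof -
  have "\<exists>g. (\<exists>k. lvl k g) \<and> (\<forall>x\<in>X. \<bar>g x - f x\<bar> < \<epsilon>)"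
  proof (cases "X = {}")
    case True
    then show ?thesis by (intro exI[of _ "\<lambda>x. 0"] conjI exI[of _ 0] lvl_zero) auto
  next
    case False
    show ?thesis
    proof (rule KK[OF assms(1) False assms(2) _ _ _ _ assms(4)])
      show "continuous_on UNIV g" if "\<exists>k. lvl k g" for g :: "real^'m \<Rightarrow> real"
        using that lvl_cont by blast
      show "\<exists>k. lvl k (\<lambda>x. max (g x) (h x))" if gk: "\<exists>k. lvl k g" and hk: "\<exists>k. lvl k h" for g h :: "real^'m \<Rightarrow> real"
      proof -
        obtain k j where kj: "lvl k g" "lvl j h" using gk hk by blast
        have "lvl (max k j) g" "lvl (max k j) h"
          using lvl_mono[OF max.cobounded1 kj(1)] lvl_mono[OF max.cobounded2 kj(2)] by auto
        then show ?thesis by (intro exI[of _ "Suc (max k j)"] lvl_max)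
      qed
      show "\<exists>k. lvl k (\<lambda>x. min (g x) (h x))" if gk: "\<exists>k. lvl k g" and hk: "\<exists>k. lvl k h" for g h :: "real^'m \<Rightarrow> real"
      proof -
        obtain k j where kj: "lvl k g" "lvl j h" using gk hk by blast
        have m: "lvl (max k j) g" "lvl (max k j) h"
          using lvl_mono[OF max.cobounded1 kj(1)] lvl_mono[OF max.cobounded2 kj(2)] by auto
        have n1: "lvl (max k j) (\<lambda>x. -1 * g x)" using lvl_scale[OF m(1)] .
        have n2: "lvl (max k j) (\<lambda>x. -1 * h x)" using lvl_scale[OF m(2)] .
        from n1 n2 have "lvl (Suc (max k j)) (\<lambda>x. max (-1 * g x) (-1 * h x))" by (rule lvl_max)
        then have "lvl (Suc (max k j)) (\<lambda>x. -1 * max (-1 * g x) (-1 * h x))" by (rule lvl_scale)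
        moreover have "(\<lambda>x. -1 * max (-1 * g x) (-1 * h x)) = (\<lambda>x. min (g x) (h x))" by (auto simp: fun_eq_iff)
        ultimately show ?thesis by (intro exI[of _ "Suc (max k j)"]) simp
      qed
      show "\<exists>g. (\<exists>k. lvl k g) \<and> g x = f x \<and> g y = f y" for x y
        by (rule interp[OF assms(3)])
    qed
  qed
  then obtain g k where g: "lvl k g" "\<forall>x\<in>X. \<bar>g x - f x\<bar> < \<epsilon>" by blast
  obtain W1 Ws where W: "layers_to (length W1) Ws 1" "\<forall>x. mlp_eval W1 Ws x = map (\<lambda>i. g x) [0..<1]"
    using realize[of 1 k "\<lambda>_. g"] g(1) by blast
  show ?thesis
  proof (intro exI conjI)
    show "homo_mlp_wf W1 Ws" unfolding homo_mlp_wf_def using layers_to_wf[OF W(1)] .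
    show "\<forall>x\<in>X. \<bar>homo_mlp_fun W1 Ws x - f x\<bar> < \<epsilon>" using g(2) W(2) by (simp add: homo_mlp_fun_def)
  qed
qed

end
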